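(* With the notation of the context, \[ z^+(\beta)=x_1^\uparrow(\beta)-\tfrac1\theta,\qquad z^-(\beta)=x_\theta^\downarrow(\beta)-\tfrac1\theta, \] where $z^+(\beta)=\lim_{h\downarrow0}\frac{z(\beta,h)-z(\beta,0)}{h}$ and $z^-(\beta)=\lim_{h\uparrow0}\frac{z(\beta,h)-z(\beta,0)}{h}$.
   Context: Fix $\theta\in\{2,3,\dots\}$, $\beta>0$. $\Delta=\{x\in[0,1]^\theta:x_1\ge\dots\ge x_\theta,\ \sum x_i=1\}$; for $x,y\in\Delta$, $y\trianglerighteq x$ means $\sum_{j\le i}y_j\ge\sum_{j\le i}x_j$ for all $i$. $\phi_\beta(x)=\frac\beta2\big(\sum_i x_i^2-1\big)-\sum_i x_i\log x_i$, $g_\beta(x)=\max_{y\in\Delta,\,y\trianglerighteq x}\phi_\beta(y)$, and $z(\beta,h)=\max_{x\in\Delta}\big(h(x_1-\tfrac1\theta)+g_\beta(x)\big)$ for $h\ge0$, $z(\beta,h)=\max_{x\in\Delta}\big(h(x_\theta-\tfrac1\theta)+g_\beta(x)\big)$ for $h\le0$. $x^\uparrow(\beta)\in\Delta$ is a maximizer of $\phi_\beta$ over $\Delta$ whose first coordinate is maximal among all maximizers, and $x^\downarrow(\beta)\in\Delta$ is a maximizer of $\phi_\beta$ whose last coordinate $x_\theta$ is minimal among all maximizers. *)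

theory Defs
  imports "HOL-Analysis.Analysis"
begin

text \<open>Vectors x = (x_1,...,x_theta) are functions nat => real, coordinates indexed by 1..theta,
  and set to 0 outside {1..theta}.\<close>

definition Simp :: "nat \<Rightarrow> (nat \<Rightarrow> real) set" where
  "Simp \<theta> = {x. (\<forall>i\<in>{1..\<theta>}. 0 \<le> x i \<and> x i \<le> 1)
              \<and> (\<forall>i\<in>{1..<\<theta>}. x (i+1) \<le> x i)
              \<and> (\<Sum>i=1..\<theta>. x i) = 1
              \<and> (\<forall>i. i \<notin> {1..\<theta>} \<longrightarrow> x i = 0)}"

definition majorizes :: "nat \<Rightarrow> (nat \<Rightarrow> real) \<Rightarrow> (nat \<Rightarrow> real) \<Rightarrow> bool" where
  "majorizes \<theta> y x \<longleftrightarrow> (\<forall>i\<in>{1..\<theta>}. (\<Sum>j=1..i. x j) \<le> (\<Sum>j=1..i. y j))"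

definition phi :: "nat \<Rightarrow> real \<Rightarrow> (nat \<Rightarrow> real) \<Rightarrow> real" where
  "phi \<theta> \<beta> x = \<beta> / 2 * ((\<Sum>i=1..\<theta>. (x i)\<^sup>2) - 1) - (\<Sum>i=1..\<theta>. x i * ln (x i))"

definition g :: "nat \<Rightarrow> real \<Rightarrow> (nat \<Rightarrow> real) \<Rightarrow> real" where
  "g \<theta> \<beta> x = Sup (phi \<theta> \<beta> ` {y \<in> Simp \<theta>. majorizes \<theta> y x})"

definition zf :: "nat \<Rightarrow> real \<Rightarrow> real \<Rightarrow> real" where
  "zf \<theta> \<beta> h =
     (if 0 \<le> h then Sup ((\<lambda>x. h * (x 1 - 1 / real \<theta>) + g \<theta> \<beta> x) ` Simp \<theta>)
      else Sup ((\<lambda>x. h * (x \<theta> - 1 / real \<theta>) + g \<theta> \<beta> x) ` Simp \<theta>))"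

definition is_phi_max :: "nat \<Rightarrow> real \<Rightarrow> (nat \<Rightarrow> real) \<Rightarrow> bool" where
  "is_phi_max \<theta> \<beta> x \<longleftrightarrow> x \<in> Simp \<theta> \<and> (\<forall>y\<in>Simp \<theta>. phi \<theta> \<beta> y \<le> phi \<theta> \<beta> x)"

definition is_x_up :: "nat \<Rightarrow> real \<Rightarrow> (nat \<Rightarrow> real) \<Rightarrow> bool" where
  "is_x_up \<theta> \<beta> x \<longleftrightarrow> is_phi_max \<theta> \<beta> x \<and> (\<forall>y. is_phi_max \<theta> \<beta> y \<longrightarrow> y 1 \<le> x 1)"

definition is_x_down :: "nat \<Rightarrow> real \<Rightarrow> (nat \<Rightarrow> real) \<Rightarrow> bool" where
  "is_x_down \<theta> \<beta> x \<longleftrightarrow> is_phi_max \<theta> \<beta> x \<and> (\<forall>y. is_phi_max \<theta> \<beta> y \<longrightarrow> x \<theta> \<le> y \<theta>)"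

end

theory Submission imports Defs "HOL-Real_Asymp.Real_Asymp" begin

definition Lf :: "real \<Rightarrow> real" where "Lf t = (if t \<le> 0 then 0 else t * ln t)"

lemma Lf_cont: "continuous_on UNIV Lf"
proof -
  have "isCont Lf t" for t
  proof (cases "t < 0")
    case True
    have ev: "eventually (\<lambda>x. Lf x = 0) (nhds t)"
      using eventually_nhds_in_open[of "{..<0}" t] True
      by (auto simp: Lf_def elim!: eventually_mono)
    show ?thesis using isCont_cong[OF ev] by simp
  next
    case False
    show ?thesis
    proof (cases "t > 0")
      case True
      have ev: "eventually (\<lambda>x. Lf x = x * ln x) (nhds t)"
        using eventually_nhds_in_open[of "{0<..}" t] True
        by (auto simp: Lf_def elim!: eventually_mono)
      moreover have "isCont (\<lambda>x. x * ln x) t" using True by (auto intro!: continuous_intros)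
      ultimately show ?thesis using isCont_cong[OF ev] by simp
    next
      case False
      with \<open>\<not> t < 0\<close> have t: "t = 0" by auto
      have l: "(Lf \<longlongrightarrow> 0) (at_left 0)"
        by (rule tendsto_eventually) (auto simp: eventually_at_left_field Lf_def intro!: exI[of _ "-1"])
      have r0: "((\<lambda>x::real. x * ln x) \<longlongrightarrow> 0) (at_right 0)" by real_asymp
      have "eventually (\<lambda>x. x * ln x = Lf x) (at_right (0::real))"
        by (auto simp: eventually_at_right_field Lf_def intro!: exI[of _ 1])
      from tendsto_cong[OF this] r0 have r: "(Lf \<longlongrightarrow> 0) (at_right 0)" by simp
      have "(Lf \<longlongrightarrow> 0) (at 0)" using filterlim_split_at_real[OF l r] .
      then show ?thesis using t by (simp add: isCont_def Lf_def)
    qed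
  qed
  then show ?thesis by (simp add: continuous_at_imp_continuous_on)
qed

lemma danskin:
  fixes S :: "'a::topological_space set" and f a :: "'a \<Rightarrow> real"
  assumes S: "compact S" and fc: "continuous_on S f" and ac: "continuous_on UNIV a"
    and x0: "x0 \<in> S" and fmax: "\<forall>y\<in>S. f y \<le> f x0"
    and amax: "\<forall>y\<in>S. f y = f x0 \<longrightarrow> a y \<le> a x0" and aC: "\<forall>y\<in>S. a y \<le> C" and e: "0 < e"
  shows "\<exists>d>0. \<forall>h. 0 < h \<longrightarrow> h < d \<longrightarrow> (\<forall>y\<in>S. h * a y + f y \<le> f x0 + h * (a x0 + e))"
proof -
  define K where "K = S \<inter> {y. a x0 + e \<le> a y}"
  have Kc: "compact K" unfolding K_def by (intro compact_Int_closed S closed_Collect_le continuous_on_const ac)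
  show ?thesis
  proof (cases "K = {}")
    case True
    have "h * a y + f y \<le> f x0 + h * (a x0 + e)" if "0<h" "y\<in>S" for h y
    proof -
      have "a y < a x0 + e" using True that K_def by auto
      hence "h * a y \<le> h*(a x0 + e)" using that(1) by (intro mult_left_mono) auto
      moreover have "f y \<le> f x0" using fmax that by auto
      ultimately show ?thesis by linarith
    qed
    thus ?thesis by (intro exI[of _ 1]) auto
  next
    case False
    obtain y0 where y0: "y0 \<in> K" "\<forall>y\<in>K. f y \<le> f y0"
      using continuous_attains_sup[OF Kc False continuous_on_subset[OF fc]] K_def by auto
    have "f y0 < f x0"
    proof (rule ccontr)
      assume "\<not> f y0 < f x0"
      hence "f y0 = f x0" using fmax y0 K_def by force
      hence "a y0 \<le> a x0" using amax y0 K_def by auto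
      thus False using y0 e K_def by auto
    qed
    define d where "d = (f x0 - f y0) / (\<bar>C - a x0 - e\<bar> + 1)"
    have d: "d > 0" using \<open>f y0 < f x0\<close> unfolding d_def by (intro divide_pos_pos) auto
    have "h * a y + f y \<le> f x0 + h * (a x0 + e)" if h: "0<h" "h<d" and y: "y\<in>S" for h y
    proof (cases "y \<in> K")
      case True
      have "h * (C - a x0 - e) \<le> h * (\<bar>C - a x0 - e\<bar> + 1)" using h by (intro mult_left_mono) auto
      also have "\<dots> \<le> d * (\<bar>C - a x0 - e\<bar> + 1)" using h by (intro mult_right_mono) auto
      also have "\<dots> = f x0 - f y0" unfolding d_def by simp
      finally have 1: "h * (C - a x0 - e) \<le> f x0 - f y0" .
      have "h * a y \<le> h * C" using h aC y by (intro mult_left_mono) auto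
      moreover have "f y \<le> f y0" using y0 True by auto
      ultimately show ?thesis using 1 by (simp add: algebra_simps)
    next
      case False
      then have "a y < a x0 + e" using y K_def by auto
      hence "h * a y \<le> h*(a x0 + e)" using h by (intro mult_left_mono) auto
      moreover have "f y \<le> f x0" using fmax y by auto
      ultimately show ?thesis by linarith
    qed
    thus ?thesis using d by blast
  qed
qed

definition phi' :: "nat \<Rightarrow> real \<Rightarrow> (nat \<Rightarrow> real) \<Rightarrow> real" where
  "phi' \<theta> \<beta> x = \<beta> / 2 * ((\<Sum>i=1..\<theta>. (x i)\<^sup>2) - 1) - (\<Sum>i=1..\<theta>. Lf (x i))"

lemma cLf: "continuous_on UNIV (\<lambda>x::nat\<Rightarrow>real. Lf (x i))"
  by (rule continuous_on_compose2[OF Lf_cont continuous_on_product_coordinates]) auto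

lemma phi'_cont: "continuous_on UNIV (phi' \<theta> \<beta>)"
  unfolding phi'_def
  by (intro continuous_intros continuous_on_product_coordinates cLf)

lemma Simp_bounds: "x \<in> Simp \<theta> \<Longrightarrow> i\<in>{1..\<theta>} \<Longrightarrow> 0 \<le> x i \<and> x i \<le> 1"
  by (auto simp: Simp_def)

lemma phi_eq: "x \<in> Simp \<theta> \<Longrightarrow> phi \<theta> \<beta> x = phi' \<theta> \<beta> x"
  unfolding phi_def phi'_def
proof -
  assume x: "x \<in> Simp \<theta>"
  have "(\<Sum>i=1..\<theta>. x i * ln (x i)) = (\<Sum>i=1..\<theta>. Lf (x i))"
  proof (rule sum.cong)
    fix i assume "i \<in> {1..\<theta>}"
    then have "0 \<le> x i" using Simp_bounds[OF x] by auto
    then show "x i * ln (x i) = Lf (x i)" by (auto simp: Lf_def)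
  qed simp
  then show "\<beta> / 2 * ((\<Sum>i = 1..\<theta>. (x i)\<^sup>2) - 1) - (\<Sum>i = 1..\<theta>. x i * ln (x i)) =
    \<beta> / 2 * ((\<Sum>i = 1..\<theta>. (x i)\<^sup>2) - 1) - (\<Sum>i = 1..\<theta>. Lf (x i))" by simp
qed

lemma Simp_compact: "compact (Simp \<theta>)"
proof -
  define B where "B i = (if i \<in> {1..\<theta>} then {0..1::real} else {0})" for i :: nat
  have "compactin (product_topology (\<lambda>i. euclidean) UNIV) (PiE UNIV B)"
    unfolding compactin_PiE by (auto simp: B_def)
  then have c1: "compact (PiE UNIV B)"
    by (simp add: euclidean_product_topology)
  have c2: "closed {x::nat\<Rightarrow>real. \<forall>i. i \<in> {1..<\<theta>} \<longrightarrow> x (i+1) \<le> x i}"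
  proof (intro closed_Collect_all)
    fix i show "closed {x::nat\<Rightarrow>real. i \<in> {1..<\<theta>} \<longrightarrow> x (i+1) \<le> x i}"
      by (cases "i \<in> {1..<\<theta>}") (auto intro!: closed_Collect_le continuous_on_product_coordinates)
  qed
  have c3: "closed {x::nat\<Rightarrow>real. (\<Sum>i=1..\<theta>. x i) = 1}"
    by (intro closed_Collect_eq continuous_intros continuous_on_product_coordinates)
  have "Simp \<theta> = PiE UNIV B \<inter> ({x::nat\<Rightarrow>real. \<forall>i. i \<in> {1..<\<theta>} \<longrightarrow> x (i+1) \<le> x i}
      \<inter> {x::nat\<Rightarrow>real. (\<Sum>i=1..\<theta>. x i) = 1})"
    by (auto simp: Simp_def B_def PiE_UNIV_domain split: if_splits)
  then show ?thesis using c1 c2 c3 by (simp add: closed_Int compact_Int_closed)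
qed

lemma Simp_nonempty: "0 < \<theta> \<Longrightarrow> (\<lambda>i. if i\<in>{1..\<theta>} then 1/real \<theta> else 0) \<in> Simp \<theta>"
  by (auto simp: Simp_def)

lemma maj_refl: "majorizes \<theta> x x" by (simp add: majorizes_def)

lemma maj_first: "majorizes \<theta> y x \<Longrightarrow> 1 \<le> \<theta> \<Longrightarrow> x 1 \<le> y 1"
  unfolding majorizes_def by (drule bspec[of _ _ 1]) auto

lemma maj_last: assumes "majorizes \<theta> y x" "x\<in>Simp \<theta>" "y \<in> Simp \<theta>" "2 \<le> \<theta>" shows "y \<theta> \<le> x \<theta>"
proof -
  have "\<theta>-1 \<in> {1..\<theta>}" using assms(4) by auto
  then have 1: "(\<Sum>j=1..\<theta>-1. x j) \<le> (\<Sum>j=1..\<theta>-1. y j)" using assms(1) unfolding majorizes_def by blast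
  have s: "(\<Sum>j=1..\<theta>. f j) = (\<Sum>j=1..\<theta>-1. f j) + f \<theta>" for f :: "nat \<Rightarrow> real"
  proof -
    have "{1..\<theta>} = insert \<theta> {1..\<theta>-1}" using assms(4) by auto
    moreover have "\<theta> \<notin> {1..\<theta>-1}" using assms(4) by auto
    ultimately show ?thesis by (simp add: add.commute)
  qed
  have "(\<Sum>j=1..\<theta>. x j) = 1" "(\<Sum>j=1..\<theta>. y j) = 1" using assms(2,3) by (auto simp: Simp_def)
  then show ?thesis using 1 s[of x] s[of y] by linarith
qed

lemma g_le: assumes "x \<in> Simp \<theta>" "\<forall>y\<in>Simp \<theta>. majorizes \<theta> y x \<longrightarrow> phi \<theta> \<beta> y \<le> B"
  shows "g \<theta> \<beta> x \<le> B"
  unfolding g_def using assms maj_refl by (intro cSup_least) auto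

lemma g_ge: assumes "x \<in> Simp \<theta>" "\<forall>y\<in>Simp \<theta>. phi \<theta> \<beta> y \<le> M"
  shows "phi \<theta> \<beta> x \<le> g \<theta> \<beta> x"
  unfolding g_def using assms maj_refl
  by (intro cSup_upper) (auto simp: bdd_above_def)

lemma divle: "0<h \<Longrightarrow> q \<le> h*c \<Longrightarrow> q/h \<le> (c::real)" by (simp add: pos_divide_le_eq mult.commute)
lemma ledivp: "0<h \<Longrightarrow> h*c \<le> q \<Longrightarrow> c \<le> q/(h::real)" by (simp add: pos_le_divide_eq mult.commute)
lemma negs: "h<0 \<Longrightarrow> h*c \<le> q \<Longrightarrow> q/h \<le> (c::real)" by (simp add: neg_divide_le_eq mult.commute)
lemma negs2: "h<0 \<Longrightarrow> q \<le> h*c \<Longrightarrow> c \<le> q/(h::real)" by (simp add: neg_le_divide_eq mult.commute)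

theorem theorem4p1:
  fixes \<theta> :: nat and \<beta> :: real
  assumes "2 \<le> \<theta>" and "0 < \<beta>"
  shows "(\<exists>x. is_x_up \<theta> \<beta> x) \<and> (\<exists>x. is_x_down \<theta> \<beta> x)
    \<and> (\<forall>x. is_x_up \<theta> \<beta> x \<longrightarrow>
          ((\<lambda>h. (zf \<theta> \<beta> h - zf \<theta> \<beta> 0) / h) \<longlongrightarrow> x 1 - 1 / real \<theta>) (at_right 0))
    \<and> (\<forall>x. is_x_down \<theta> \<beta> x \<longrightarrow>
          ((\<lambda>h. (zf \<theta> \<beta> h - zf \<theta> \<beta> 0) / h) \<longlongrightarrow> x \<theta> - 1 / real \<theta>) (at_left 0))"
proof -
  define S where "S = Simp \<theta>"
  have Sc: "compact S" unfolding S_def by (rule Simp_compact)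
  have Sne: "S \<noteq> {}" unfolding S_def using Simp_nonempty[of \<theta>] assms(1) by auto
  obtain xs where xs: "xs \<in> S" "\<forall>y\<in>S. phi' \<theta> \<beta> y \<le> phi' \<theta> \<beta> xs"
    using continuous_attains_sup[OF Sc Sne continuous_on_subset[OF phi'_cont[of \<theta> \<beta>]]] by auto
  define M where "M = phi \<theta> \<beta> xs"
  have Mmax: "\<forall>y\<in>S. phi \<theta> \<beta> y \<le> M" using xs phi_eq unfolding M_def S_def by auto
  have phic: "continuous_on S (phi \<theta> \<beta>)"
    using continuous_on_subset[OF phi'_cont[of \<theta> \<beta>]] phi_eq unfolding S_def
    by (metis (no_types, lifting) continuous_on_cong subset_UNIV)
  have bnd: "0 \<le> y i \<and> y i \<le> 1" if "y \<in> S" "i \<in> {1..\<theta>}" for y i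
    using Simp_bounds that unfolding S_def by auto
  have th0: "0 < 1 / real \<theta>" "1 / real \<theta> \<le> 1" using assms(1) by auto
  have gM: "g \<theta> \<beta> x \<le> M" if "x \<in> S" for x
    using g_le[of x \<theta> \<beta> M] that Mmax unfolding S_def by auto
  have gphi: "phi \<theta> \<beta> x \<le> g \<theta> \<beta> x" if "x \<in> S" for x
    using g_ge[of x \<theta> \<beta> M] that Mmax unfolding S_def by auto
  have zf0: "zf \<theta> \<beta> 0 = M"
  proof -
    have "zf \<theta> \<beta> 0 = Sup (g \<theta> \<beta> ` S)" unfolding zf_def S_def by simp
    also have "\<dots> = M"
    proof (rule cSup_eq_maximum)
      show "M \<in> g \<theta> \<beta> ` S" using gM gphi xs(1) unfolding M_def
        by (metis antisym image_eqI M_def)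
    qed (use gM in auto)
    finally show ?thesis .
  qed
  define A where "A = S \<inter> {y. M \<le> phi' \<theta> \<beta> y}"
  have Ac: "compact A" unfolding A_def
    by (intro compact_Int_closed Sc closed_Collect_le continuous_on_const phi'_cont)
  have xsA: "xs \<in> A" using xs phi_eq unfolding A_def M_def S_def by auto
  have A_iff: "y \<in> A \<longleftrightarrow> is_phi_max \<theta> \<beta> y" for y
  proof
    assume "y \<in> A"
    then have "y \<in> S" "M \<le> phi \<theta> \<beta> y" using phi_eq unfolding A_def S_def by auto
    then show "is_phi_max \<theta> \<beta> y" using Mmax unfolding is_phi_max_def S_def by auto
  next
    assume "is_phi_max \<theta> \<beta> y"
    then show "y \<in> A" using xs(1) phi_eq unfolding is_phi_max_def A_def S_def M_def by force
  qed
  have Ane: "A \<noteq> {}" using xsA by auto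
  obtain xu where xu: "xu \<in> A" "\<forall>y\<in>A. y 1 \<le> xu 1"
    using continuous_attains_sup[OF Ac Ane continuous_on_subset[OF continuous_on_product_coordinates]] by auto
  obtain xd where xd: "xd \<in> A" "\<forall>y\<in>A. xd \<theta> \<le> y \<theta>"
    using continuous_attains_inf[OF Ac Ane continuous_on_subset[OF continuous_on_product_coordinates]] by auto
  have ex1: "\<exists>x. is_x_up \<theta> \<beta> x" using xu A_iff unfolding is_x_up_def by blast
  have ex2: "\<exists>x. is_x_down \<theta> \<beta> x" using xd A_iff unfolding is_x_down_def by blast
  have maxM: "phi \<theta> \<beta> x0 = M" if "is_phi_max \<theta> \<beta> x0" for x0
    using that xs(1) Mmax unfolding is_phi_max_def S_def by (simp add: M_def antisym)
  have zfp: "zf \<theta> \<beta> h = Sup ((\<lambda>x. h * (x 1 - 1 / real \<theta>) + g \<theta> \<beta> x) ` S)" if "0 \<le> h" for h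
    using that unfolding zf_def S_def by simp
  have up_lower: "h * (x0 1 - 1/real \<theta>) + M \<le> zf \<theta> \<beta> h" if "0 < h" "x0 \<in> S" "phi \<theta> \<beta> x0 = M" for h x0
  proof -
    have "h * (x0 1 - 1/real \<theta>) + M \<le> h * (x0 1 - 1/real \<theta>) + g \<theta> \<beta> x0"
      using gphi[OF that(2)] that(3) by simp
    also have "\<dots> \<le> zf \<theta> \<beta> h" unfolding zfp[OF less_imp_le[OF that(1)]]
    proof (rule cSup_upper)
      show "bdd_above ((\<lambda>x. h * (x 1 - 1 / real \<theta>) + g \<theta> \<beta> x) ` S)"
        unfolding bdd_above_def
      proof (intro exI ballI)
        fix v assume "v \<in> (\<lambda>x. h * (x 1 - 1 / real \<theta>) + g \<theta> \<beta> x) ` S"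
        then obtain x where x: "x \<in> S" "v = h * (x 1 - 1 / real \<theta>) + g \<theta> \<beta> x" by auto
        have "x 1 - 1/real \<theta> \<le> 1" using bnd[OF x(1), of 1] th0 assms(1) by (simp only: atLeastAtMost_iff) linarith
        then have "h * (x 1 - 1 / real \<theta>) \<le> h * 1" using that(1) by (intro mult_left_mono) auto
        then show "v \<le> h + M" using x gM[OF x(1)] by simp
      qed
    qed (use that in auto)
    finally show ?thesis .
  qed
  have up_upper: "zf \<theta> \<beta> h \<le> B" if "0 < h" "\<forall>y\<in>S. h * (y 1 - 1/real \<theta>) + phi \<theta> \<beta> y \<le> B" for h B
    unfolding zfp[OF less_imp_le[OF that(1)]]
  proof (rule cSup_least)
    show "(\<lambda>x. h * (x 1 - 1 / real \<theta>) + g \<theta> \<beta> x) ` S \<noteq> {}" using Sne by auto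
    fix v assume "v \<in> (\<lambda>x. h * (x 1 - 1 / real \<theta>) + g \<theta> \<beta> x) ` S"
    then obtain x where x: "x \<in> S" "v = h * (x 1 - 1 / real \<theta>) + g \<theta> \<beta> x" by auto
    have "g \<theta> \<beta> x \<le> B - h * (x 1 - 1 / real \<theta>)"
    proof (rule g_le)
      show "x \<in> Simp \<theta>" using x S_def by simp
      show "\<forall>y\<in>Simp \<theta>. majorizes \<theta> y x \<longrightarrow> phi \<theta> \<beta> y \<le> B - h * (x 1 - 1 / real \<theta>)"
      proof (intro ballI impI)
        fix y assume y: "y \<in> Simp \<theta>" "majorizes \<theta> y x"
        have "x 1 \<le> y 1" using maj_first[OF y(2)] assms(1) by auto
        then have "h * (x 1 - 1 / real \<theta>) \<le> h * (y 1 - 1 / real \<theta>)" using that(1) by (intro mult_left_mono) auto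
        then show "phi \<theta> \<beta> y \<le> B - h * (x 1 - 1 / real \<theta>)" using that(2) y(1) S_def by force
      qed
    qed
    then show "v \<le> B" using x by simp
  qed
  have zfn: "zf \<theta> \<beta> h = Sup ((\<lambda>x. h * (x \<theta> - 1 / real \<theta>) + g \<theta> \<beta> x) ` S)" if "h < 0" for h
    using that unfolding zf_def S_def by simp
  have dn_lower: "h * (x0 \<theta> - 1/real \<theta>) + M \<le> zf \<theta> \<beta> h" if "h < 0" "x0 \<in> S" "phi \<theta> \<beta> x0 = M" for h x0
  proof -
    have "h * (x0 \<theta> - 1/real \<theta>) + M \<le> h * (x0 \<theta> - 1/real \<theta>) + g \<theta> \<beta> x0"
      using gphi[OF that(2)] that(3) by simp
    also have "\<dots> \<le> zf \<theta> \<beta> h" unfolding zfn[OF that(1)]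
    proof (rule cSup_upper)
      show "bdd_above ((\<lambda>x. h * (x \<theta> - 1 / real \<theta>) + g \<theta> \<beta> x) ` S)"
        unfolding bdd_above_def
      proof (intro exI ballI)
        fix v assume "v \<in> (\<lambda>x. h * (x \<theta> - 1 / real \<theta>) + g \<theta> \<beta> x) ` S"
        then obtain x where x: "x \<in> S" "v = h * (x \<theta> - 1 / real \<theta>) + g \<theta> \<beta> x" by auto
        have "-1 \<le> x \<theta> - 1/real \<theta>" using bnd[OF x(1), of \<theta>] th0 assms(1) by (simp only: atLeastAtMost_iff) linarith
        then have "h * (x \<theta> - 1 / real \<theta>) \<le> h * (-1)" using that(1) by (intro mult_left_mono_neg) auto
        then show "v \<le> - h + M" using x gM[OF x(1)] by simp
      qed
    qed (use that in auto)
    finally show ?thesis .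
  qed
  have dn_upper: "zf \<theta> \<beta> h \<le> B" if "h < 0" "\<forall>y\<in>S. h * (y \<theta> - 1/real \<theta>) + phi \<theta> \<beta> y \<le> B" for h B
    unfolding zfn[OF that(1)]
  proof (rule cSup_least)
    show "(\<lambda>x. h * (x \<theta> - 1 / real \<theta>) + g \<theta> \<beta> x) ` S \<noteq> {}" using Sne by auto
    fix v assume "v \<in> (\<lambda>x. h * (x \<theta> - 1 / real \<theta>) + g \<theta> \<beta> x) ` S"
    then obtain x where x: "x \<in> S" "v = h * (x \<theta> - 1 / real \<theta>) + g \<theta> \<beta> x" by auto
    have "g \<theta> \<beta> x \<le> B - h * (x \<theta> - 1 / real \<theta>)"
    proof (rule g_le)
      show "x \<in> Simp \<theta>" using x S_def by simp
      show "\<forall>y\<in>Simp \<theta>. majorizes \<theta> y x \<longrightarrow> phi \<theta> \<beta> y \<le> B - h * (x \<theta> - 1 / real \<theta>)"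
      proof (intro ballI impI)
        fix y assume y: "y \<in> Simp \<theta>" "majorizes \<theta> y x"
        have "y \<theta> \<le> x \<theta>" using maj_last[OF y(2)] x(1) y(1) assms(1) S_def by auto
        then have "h * (x \<theta> - 1 / real \<theta>) \<le> h * (y \<theta> - 1 / real \<theta>)" using that(1) by (intro mult_left_mono_neg) auto
        then show "phi \<theta> \<beta> y \<le> B - h * (x \<theta> - 1 / real \<theta>)" using that(2) y(1) S_def by force
      qed
    qed
    then show "v \<le> B" using x by simp
  qed
  have lim_up: "((\<lambda>h. (zf \<theta> \<beta> h - zf \<theta> \<beta> 0) / h) \<longlongrightarrow> x0 1 - 1 / real \<theta>) (at_right 0)"
    if "is_x_up \<theta> \<beta> x0" for x0
  proof -
    have x0: "x0 \<in> S" "phi \<theta> \<beta> x0 = M" using that maxM unfolding is_x_up_def is_phi_max_def S_def by auto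
    have am: "\<forall>y\<in>S. phi \<theta> \<beta> y = phi \<theta> \<beta> x0 \<longrightarrow> y 1 - 1 / real \<theta> \<le> x0 1 - 1 / real \<theta>"
    proof (intro ballI impI)
      fix y assume "y \<in> S" "phi \<theta> \<beta> y = phi \<theta> \<beta> x0"
      then have "is_phi_max \<theta> \<beta> y" using Mmax x0 unfolding is_phi_max_def S_def by auto
      then show "y 1 - 1 / real \<theta> \<le> x0 1 - 1 / real \<theta>" using that unfolding is_x_up_def by auto
    qed
    have aC: "\<forall>y\<in>S. y 1 - 1 / real \<theta> \<le> 1"
    proof
      fix y assume "y \<in> S" then show "y 1 - 1 / real \<theta> \<le> 1"
        proof -
          have "1 \<in> {1..\<theta>}" using assms(1) by auto
          from bnd[OF \<open>y \<in> S\<close> this] th0 show ?thesis by linarith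
        qed
    qed
    show ?thesis unfolding tendsto_iff
    proof (intro allI impI)
      fix e :: real assume e: "0 < e"
      obtain d where d: "d > 0" "\<forall>h. 0 < h \<longrightarrow> h < d \<longrightarrow> (\<forall>y\<in>S. h * (y 1 - 1 / real \<theta>) + phi \<theta> \<beta> y
          \<le> phi \<theta> \<beta> x0 + h * ((x0 1 - 1 / real \<theta>) + e/2))"
      proof -
        have ca: "continuous_on UNIV (\<lambda>x::nat\<Rightarrow>real. x 1 - 1/real \<theta>)"
          by (intro continuous_intros continuous_on_product_coordinates)
        have fm: "\<forall>y\<in>S. phi \<theta> \<beta> y \<le> phi \<theta> \<beta> x0" using Mmax x0 by auto
        show ?thesis using danskin[OF Sc phic ca x0(1) fm am aC, of "e/2"] e that by auto
      qed
      show "\<forall>\<^sub>F h in at_right 0. dist ((zf \<theta> \<beta> h - zf \<theta> \<beta> 0) / h) (x0 1 - 1 / real \<theta>) < e"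
        unfolding eventually_at_right_field
      proof (intro exI[of _ d] conjI allI impI)
        fix h :: real assume h: "0 < h" "h < d"
        have u: "zf \<theta> \<beta> h \<le> M + h * ((x0 1 - 1 / real \<theta>) + e/2)"
          using up_upper[OF h(1)] d(2) h x0(2) by auto
        have l: "h * (x0 1 - 1/real \<theta>) + M \<le> zf \<theta> \<beta> h" using up_lower[OF h(1) x0] .
        have 1: "(zf \<theta> \<beta> h - zf \<theta> \<beta> 0) / h \<le> (x0 1 - 1 / real \<theta>) + e/2"
          using u h(1) zf0 by (intro divle) auto
        have 2: "x0 1 - 1 / real \<theta> \<le> (zf \<theta> \<beta> h - zf \<theta> \<beta> 0) / h"
          using l h(1) zf0 by (intro ledivp) auto
        show "dist ((zf \<theta> \<beta> h - zf \<theta> \<beta> 0) / h) (x0 1 - 1 / real \<theta>) < e"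
          using 1 2 e by (simp add: dist_real_def abs_if)
      qed (use d in auto)
    qed
  qed
  have lim_dn: "((\<lambda>h. (zf \<theta> \<beta> h - zf \<theta> \<beta> 0) / h) \<longlongrightarrow> x0 \<theta> - 1 / real \<theta>) (at_left 0)"
    if "is_x_down \<theta> \<beta> x0" for x0
  proof -
    have x0: "x0 \<in> S" "phi \<theta> \<beta> x0 = M" using that maxM unfolding is_x_down_def is_phi_max_def S_def by auto
    have am: "\<forall>y\<in>S. phi \<theta> \<beta> y = phi \<theta> \<beta> x0 \<longrightarrow> 1 / real \<theta> - y \<theta> \<le> 1 / real \<theta> - x0 \<theta>"
    proof (intro ballI impI)
      fix y assume "y \<in> S" "phi \<theta> \<beta> y = phi \<theta> \<beta> x0"
      then have "is_phi_max \<theta> \<beta> y" using Mmax x0 unfolding is_phi_max_def S_def by auto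
      then show "1 / real \<theta> - y \<theta> \<le> 1 / real \<theta> - x0 \<theta>" using that unfolding is_x_down_def by auto
    qed
    have aC: "\<forall>y\<in>S. 1 / real \<theta> - y \<theta> \<le> 1"
    proof
      fix y assume "y \<in> S" then show "1 / real \<theta> - y \<theta> \<le> 1"
        proof -
          have "\<theta> \<in> {1..\<theta>}" using assms(1) by auto
          from bnd[OF \<open>y \<in> S\<close> this] th0 show ?thesis by linarith
        qed
    qed
    show ?thesis unfolding tendsto_iff
    proof (intro allI impI)
      fix e :: real assume e: "0 < e"
      obtain d where d: "d > 0" "\<forall>k. 0 < k \<longrightarrow> k < d \<longrightarrow> (\<forall>y\<in>S. k * (1 / real \<theta> - y \<theta>) + phi \<theta> \<beta> y
          \<le> phi \<theta> \<beta> x0 + k * ((1 / real \<theta> - x0 \<theta>) + e/2))"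
      proof -
        have ca: "continuous_on UNIV (\<lambda>x::nat\<Rightarrow>real. 1/real \<theta> - x \<theta>)"
          by (intro continuous_intros continuous_on_product_coordinates)
        have fm: "\<forall>y\<in>S. phi \<theta> \<beta> y \<le> phi \<theta> \<beta> x0" using Mmax x0 by auto
        show ?thesis using danskin[OF Sc phic ca x0(1) fm am aC, of "e/2"] e that by auto
      qed
      show "\<forall>\<^sub>F h in at_left 0. dist ((zf \<theta> \<beta> h - zf \<theta> \<beta> 0) / h) (x0 \<theta> - 1 / real \<theta>) < e"
        unfolding eventually_at_left_field
      proof (intro exI[of _ "-d"] conjI allI impI)
        fix h :: real assume h: "-d < h" "h < 0"
        have "\<forall>y\<in>S. h * (y \<theta> - 1/real \<theta>) + phi \<theta> \<beta> y \<le> M + (-h) * ((1 / real \<theta> - x0 \<theta>) + e/2)"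
        proof
          fix y assume "y \<in> S"
          then have "(-h) * (1 / real \<theta> - y \<theta>) + phi \<theta> \<beta> y \<le> M + (-h) * ((1 / real \<theta> - x0 \<theta>) + e/2)"
          proof -
            have "0 < -h" "-h < d" using h by auto
            from d(2)[rule_format, OF this \<open>y \<in> S\<close>] show ?thesis using x0(2) by simp
          qed
          then show "h * (y \<theta> - 1/real \<theta>) + phi \<theta> \<beta> y \<le> M + (-h) * ((1 / real \<theta> - x0 \<theta>) + e/2)"
            by (simp add: algebra_simps)
        qed
        then have u: "zf \<theta> \<beta> h \<le> M + (-h) * ((1 / real \<theta> - x0 \<theta>) + e/2)"
          using dn_upper[OF h(2)] by auto
        have l: "h * (x0 \<theta> - 1/real \<theta>) + M \<le> zf \<theta> \<beta> h" using dn_lower[OF h(2) x0] .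
        have 1: "(x0 \<theta> - 1 / real \<theta>) - e/2 \<le> (zf \<theta> \<beta> h - zf \<theta> \<beta> 0) / h"
        proof (rule negs2[OF h(2)])
          have "(-h)*((1 / real \<theta> - x0 \<theta>) + e/2) = h*((x0 \<theta> - 1 / real \<theta>) - e/2)" by (simp add: algebra_simps)
          then show "zf \<theta> \<beta> h - zf \<theta> \<beta> 0 \<le> h*((x0 \<theta> - 1 / real \<theta>) - e/2)" using u zf0 by linarith
        qed
        have 2: "(zf \<theta> \<beta> h - zf \<theta> \<beta> 0) / h \<le> x0 \<theta> - 1 / real \<theta>"
          using l h(2) zf0 by (intro negs) auto
        show "dist ((zf \<theta> \<beta> h - zf \<theta> \<beta> 0) / h) (x0 \<theta> - 1 / real \<theta>) < e"
          using 1 2 e by (simp add: dist_real_def abs_if)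
      qed (use d in auto)
    qed
  qed
  show ?thesis using ex1 ex2 lim_up lim_dn by blast
qed

end
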